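(* Let $A\in H_n$ and $B\in H_k$ be neither positive semidefinite nor negative semidefinite, with $\|A_+\|_\infty\geq\|B_+\|_\infty$ and $\|A_-\|_\infty\geq\|B_-\|_\infty$. Then there exists a positive unital linear map $\Phi:H_n\to H_k$ such that $\Phi(A)=B$.
   Context: $H_n$ denotes the $n\times n$ complex Hermitian matrices. A linear map $\Phi:H_n\to H_k$ is positive if it maps positive semidefinite matrices to positive semidefinite matrices and unital if $\Phi(\mathbb{1})=\mathbb{1}$. Every $A$ decomposes uniquely as $A=A_+-A_-$ with $A_\pm$ positive semidefinite and $A_+A_-=0$. $\|\cdot\|_\infty$ is the operator norm. *)

theory Defs
  imports "HOL-Analysis.Analysis"
begin

definition hermitian :: "complex^'n^'n \<Rightarrow> bool" where
  "hermitian A \<longleftrightarrow> (\<forall>i j. A $ i $ j = cnj (A $ j $ i))"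

definition psd :: "complex^'n^'n \<Rightarrow> bool" where
  "psd A \<longleftrightarrow> hermitian A \<and> (\<forall>x::complex^'n. 0 \<le> Re (\<Sum>i\<in>UNIV. cnj (x $ i) * (A *v x) $ i))"

text \<open>Positive part A_+: the unique psd P with A = P - N, N psd, P N = 0 (here N = P - A).\<close>
definition pos_part :: "complex^'n^'n \<Rightarrow> complex^'n^'n" where
  "pos_part A = (THE P. psd P \<and> psd (P - A) \<and> P ** (P - A) = 0)"

definition neg_part :: "complex^'n^'n \<Rightarrow> complex^'n^'n" where
  "neg_part A = pos_part A - A"

definition opnorm :: "complex^'n^'n \<Rightarrow> real" where
  "opnorm A = onorm (\<lambda>x::complex^'n. A *v x)"

text \<open>A real-linear map H_n -> H_k (values off H_n are irrelevant).\<close>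
definition herm_linear :: "(complex^'n^'n \<Rightarrow> complex^'k^'k) \<Rightarrow> bool" where
  "herm_linear \<Phi> \<longleftrightarrow> (\<forall>X. hermitian X \<longrightarrow> hermitian (\<Phi> X)) \<and>
     (\<forall>X Y a b. hermitian X \<longrightarrow> hermitian Y \<longrightarrow>
        \<Phi> (a *\<^sub>R X + b *\<^sub>R Y) = a *\<^sub>R \<Phi> X + b *\<^sub>R \<Phi> Y)"

definition positive_map :: "(complex^'n^'n \<Rightarrow> complex^'k^'k) \<Rightarrow> bool" where
  "positive_map \<Phi> \<longleftrightarrow> (\<forall>X. psd X \<longrightarrow> psd (\<Phi> X))"

definition unital_map :: "(complex^'n^'n \<Rightarrow> complex^'k^'k) \<Rightarrow> bool" where
  "unital_map \<Phi> \<longleftrightarrow> \<Phi> (mat 1) = mat 1"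

end

theory Submission
  imports Defs
begin

definition ci :: "complex^'n \<Rightarrow> complex^'n \<Rightarrow> complex" where
  "ci x y = (\<Sum>i\<in>UNIV. cnj (x $ i) * y $ i)"

lemma ci_add_right: "ci x (y + z) = ci x y + ci x z"
  by (simp add: ci_def distrib_left sum.distrib)
lemma ci_add_left: "ci (x + y) z = ci x z + ci y z"
  by (simp add: ci_def distrib_right sum.distrib)
lemma ci_diff_right: "ci x (y - z) = ci x y - ci x z"
  by (simp add: ci_def right_diff_distrib sum_subtractf)
lemma ci_diff_left: "ci (x - y) z = ci x z - ci y z"
  by (simp add: ci_def left_diff_distrib sum_subtractf)
lemma ci_scale_right: "ci x (c *s y) = c * ci x y"
  by (simp add: ci_def sum_distrib_left algebra_simps)
lemma ci_scale_left: "ci (c *s x) y = cnj c * ci x y"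
  by (simp add: ci_def sum_distrib_left algebra_simps)
lemma ci_zero_right[simp]: "ci x 0 = 0" by (simp add: ci_def)
lemma ci_zero_left[simp]: "ci 0 x = 0" by (simp add: ci_def)
lemma ci_sum_right: "ci x (\<Sum>e\<in>E. f e) = (\<Sum>e\<in>E. ci x (f e))"
  by (simp add: ci_def sum_component sum_distrib_left sum.swap[of _ E])
lemma ci_sum_left: "ci (\<Sum>e\<in>E. f e) x = (\<Sum>e\<in>E. ci (f e) x)"
  by (simp add: ci_def sum_component sum_distrib_right sum.swap[of _ E])
lemma ci_cnj: "ci y x = cnj (ci x y)"
  by (simp add: ci_def mult.commute)
lemma Re_ci: "Re (ci x y) = inner x y"
  by (simp add: ci_def inner_vec_def inner_complex_def Re_sum)
lemma ci_self: "ci x x = of_real (norm x ^ 2)"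
proof -
  have "ci x x = (\<Sum>i\<in>UNIV. of_real (cmod (x $ i) ^ 2))"
    unfolding ci_def by (intro sum.cong refl) (metis complex_norm_square of_real_power mult.commute)
  also have "\<dots> = of_real (\<Sum>i\<in>UNIV. cmod (x $ i) ^ 2)" by simp
  also have "(\<Sum>i\<in>UNIV. cmod (x $ i) ^ 2) = norm x ^ 2"
    by (simp add: norm_vec_def L2_set_def sum_nonneg)
  finally show ?thesis .
qed
lemma ci_herm:
  assumes "hermitian A"
  shows "ci x (A *v y) = ci (A *v x) y"
proof -
  have h: "cnj (A$j$i) = A$i$j" for i j using assms unfolding hermitian_def by metis
  have "ci x (A *v y) = (\<Sum>i\<in>UNIV. \<Sum>j\<in>UNIV. cnj (x$i) * A$i$j * y$j)"
    by (simp add: ci_def matrix_vector_mult_def sum_distrib_left mult.assoc)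
  also have "\<dots> = (\<Sum>j\<in>UNIV. \<Sum>i\<in>UNIV. cnj (x$i) * A$i$j * y$j)"
    by (rule sum.swap)
  also have "\<dots> = (\<Sum>j\<in>UNIV. \<Sum>i\<in>UNIV. cnj (A$j$i) * cnj (x$i) * y$j)"
    by (simp only: h mult.commute mult.left_commute)
  also have "\<dots> = ci (A *v x) y"
    by (simp add: ci_def matrix_vector_mult_def sum_distrib_right cnj_sum)
  finally show ?thesis .
qed

lemma scaleR_vec_s: "t *\<^sub>R (x::complex^'n) = (of_real t :: complex) *s x"
  by (simp add: vec_eq_iff) (simp add: scaleR_conv_of_real)
lemma mv_scale: "(A::complex^'n^'n) *v (c *s x) = c *s (A *v x)"
  by (simp add: vec_eq_iff matrix_vector_mult_def sum_distrib_left algebra_simps)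
lemma mv_scaleR: "(A::complex^'n^'n) *v (t *\<^sub>R x) = t *\<^sub>R (A *v x)"
  by (simp add: scaleR_vec_s mv_scale)
lemma mv_diff: "(A::complex^'n^'n) *v (x - y) = A *v x - A *v y"
  by (simp add: vec_eq_iff matrix_vector_mult_def right_diff_distrib sum_subtractf)
lemma ci_scaleR_right: "ci x (t *\<^sub>R y) = of_real t * ci x y"
  by (simp add: scaleR_vec_s ci_scale_right)
lemma ci_scaleR_left: "ci (t *\<^sub>R x) y = of_real t * ci x y"
  by (simp add: scaleR_vec_s ci_scale_left)
lemma cc: "c * cnj c = (of_real (cmod c))^2" using complex_norm_square[of c] by simp
lemma norm_scale_s: "norm (c *s (x::complex^'n)) = cmod c * norm x"
proof -
  have "of_real (norm (c *s x) ^ 2) = (of_real ((cmod c * norm x)^2) :: complex)"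
    by (simp only: ci_self[symmetric] ci_scale_left ci_scale_right)
       (simp add: ci_self power_mult_distrib complex_norm_square mult.commute cc)
  hence "norm (c *s x) ^ 2 = (cmod c * norm x)^2" using of_real_eq_iff by blast
  thus ?thesis by (simp add: power2_eq_iff_nonneg)
qed
lemma continuous_ci: "continuous_on S (\<lambda>x. ci e x)"
  unfolding ci_def by (intro continuous_intros)

lemma herm_inner: "hermitian A \<Longrightarrow> inner x (A *v y) = inner (A *v x) y"
  by (metis Re_ci ci_herm)

definition eigsys :: "complex^'n^'n \<Rightarrow> (complex^'n) set \<Rightarrow> bool" where
  "eigsys A E \<longleftrightarrow> finite E \<and> (\<forall>e\<in>E. norm e = 1 \<and> (\<exists>\<mu>::real. A *v e = of_real \<mu> *s e))
     \<and> (\<forall>e\<in>E. \<forall>e'\<in>E. e \<noteq> e' \<longrightarrow> ci e e' = 0)"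

lemma ci_unit: "norm e = 1 \<Longrightarrow> ci e e = 1"
  by (simp add: ci_self)

lemma eig_step:
  fixes A :: "complex^'n^'n"
  assumes herm: "hermitian A" and es: "eigsys A E" and y0: "y \<noteq> 0" and yE: "\<forall>e\<in>E. ci e y = 0"
  shows "\<exists>z. norm z = 1 \<and> (\<exists>\<mu>::real. A *v z = of_real \<mu> *s z) \<and> (\<forall>e\<in>E. ci e z = 0)"
proof -
  define S where "S = {x. \<forall>e\<in>E. ci e x = 0}"
  define K where "K = S \<inter> sphere 0 1"
  define f where "f x = Re (ci x (A *v x))" for x
  have Sint: "S = (\<Inter>e\<in>E. {x. ci e x = 0})" unfolding S_def by auto
  have "closed S" unfolding Sint
    by (intro closed_INT ballI closed_Collect_eq continuous_ci continuous_intros)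
  hence "compact K" unfolding K_def by (simp add: compact_Int_closed compact_sphere Int_commute closed_Int_compact)
  define y1 where "y1 = (1 / norm y) *\<^sub>R y"
  have "y1 \<in> K" using y0 yE unfolding K_def S_def y1_def by (simp add: ci_scaleR_right)
  hence "K \<noteq> {}" by auto
  have "continuous_on K f" unfolding f_def ci_def matrix_vector_mult_def
    by (intro continuous_intros)
  obtain x0 where x0K: "x0 \<in> K" and x0max: "\<forall>w\<in>K. f w \<le> f x0"
    using continuous_attains_sup[OF \<open>compact K\<close> \<open>K \<noteq> {}\<close> \<open>continuous_on K f\<close>] by blast
  define l where "l = f x0"
  have fi: "f w = inner w (A *v w)" for w unfolding f_def by (simp add: Re_ci)
  have Sadd: "a \<in> S \<Longrightarrow> b \<in> S \<Longrightarrow> a + b \<in> S" for a b unfolding S_def by (simp add: ci_add_right)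
  have Sdiff: "a \<in> S \<Longrightarrow> b \<in> S \<Longrightarrow> a - b \<in> S" for a b unfolding S_def by (simp add: ci_diff_right)
  have SR: "a \<in> S \<Longrightarrow> t *\<^sub>R a \<in> S" for a t unfolding S_def by (simp add: ci_scaleR_right)
  have claim1: "f w \<le> l * norm w ^ 2" if "w \<in> S" for w
  proof (cases "w = 0")
    case True thus ?thesis by (simp add: f_def)
  next
    case False
    define w' where "w' = (1 / norm w) *\<^sub>R w"
    have "w' \<in> K" using False that SR unfolding K_def w'_def by simp
    hence "f w' \<le> l" using x0max l_def by auto
    moreover have "f w' = f w / norm w ^ 2" unfolding fi w'_def
      by (simp add: mv_scaleR power2_eq_square)
    ultimately show ?thesis using False by (simp add: field_simps)
  qed
  have x0S: "x0 \<in> S" and nx0: "norm x0 = 1" using x0K unfolding K_def by auto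
  have AS: "A *v x \<in> S" if "x \<in> S" for x
    unfolding S_def mem_Collect_eq
  proof
    fix e assume "e \<in> E"
    then obtain \<mu> :: real where "A *v e = of_real \<mu> *s e" using es unfolding eigsys_def by blast
    thus "ci e (A *v x) = 0" using that \<open>e \<in> E\<close> unfolding S_def
      by (simp add: ci_herm[OF herm] ci_scale_left)
  qed
  define R where "R x = l *\<^sub>R x - A *v x" for x
  have RS: "x \<in> S \<Longrightarrow> R x \<in> S" for x unfolding R_def using AS SR Sdiff by blast
  have Rself: "inner x (R y) = inner (R x) y" for x y
    unfolding R_def by (simp add: inner_diff_right inner_diff_left herm_inner[OF herm])
  have Radd: "R (x + y) = R x + R y" for x y
    unfolding R_def by (simp add: matrix_vector_right_distrib scaleR_add_right)
  have RR: "R (t *\<^sub>R x) = t *\<^sub>R R x" for x t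
    unfolding R_def by (simp add: mv_scaleR scaleR_diff_right)
  have Qnn: "0 \<le> inner w (R w)" if "w \<in> S" for w
    using claim1[OF that] unfolding R_def fi by (simp add: inner_diff_right power2_norm_eq_inner)
  have Q0: "inner x0 (R x0) = 0"
    unfolding R_def l_def fi using nx0 by (simp add: inner_diff_right power2_norm_eq_inner[symmetric])
  define r where "r = R x0"
  have rS: "r \<in> S" using RS x0S r_def by auto
  have expand: "inner (x0 - s *\<^sub>R r) (R (x0 - s *\<^sub>R r)) = - 2 * s * inner r r + s^2 * inner r (R r)" for s
  proof -
    have eqR: "R (x0 - s *\<^sub>R r) = r - s *\<^sub>R R r"
      using Radd[of x0 "(-s) *\<^sub>R r"] RR[of "-s" r] unfolding r_def by simp
    have a: "inner x0 r = 0" using Q0 unfolding r_def .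
    have b: "inner x0 (R r) = inner r r" using Rself[of x0 r] unfolding r_def by simp
    show ?thesis unfolding eqR
      by (simp add: inner_diff_left inner_diff_right a b inner_commute[of r x0] power2_eq_square algebra_simps)
  qed
  have "inner r r = 0"
  proof (rule ccontr)
    assume ne: "inner r r \<noteq> 0"
    hence pos: "inner r r > 0" by (simp add: order_less_le)
    define C where "C = \<bar>inner r (R r)\<bar> + 1"
    define s where "s = inner r r / C"
    have Cp: "C > 0" unfolding C_def by simp
    have sp: "s > 0" unfolding s_def using pos Cp by simp
    have "0 \<le> - 2 * s * inner r r + s^2 * inner r (R r)"
      using Qnn[OF Sdiff[OF x0S SR[OF rS]]] expand by simp
    also have "\<dots> \<le> - 2 * s * inner r r + s^2 * C"
      using sp unfolding C_def by (intro add_left_mono mult_left_mono) auto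
    also have "s^2 * C = s * inner r r" unfolding s_def using Cp by (simp add: power2_eq_square)
    finally have "0 \<le> - 2 * s * inner r r + s * inner r r" .
    hence "s * inner r r \<le> 0" by simp
    moreover have "s * inner r r > 0" using sp pos by simp
    ultimately show False by simp
  qed
  hence "R x0 = 0" unfolding r_def by simp
  hence "A *v x0 = of_real l *s x0" unfolding R_def by (simp add: scaleR_vec_s)
  thus ?thesis using nx0 x0S unfolding S_def by blast
qed


lemma eigsys_ci: "eigsys A E \<Longrightarrow> e \<in> E \<Longrightarrow> e' \<in> E \<Longrightarrow> ci e e' = (if e = e' then 1 else 0)"
  unfolding eigsys_def by (auto simp: ci_unit)

lemma eig_card:
  fixes A :: "complex^'n^'n"
  assumes es: "eigsys A E"
  shows "card E \<le> CARD('n)"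
proof -
  define J where "J x = \<i> *s x" for x :: "complex^'n"
  define T where "T = E \<union> J ` E"
  have fin: "finite E" using es unfolding eigsys_def by auto
  have c: "ci e e' = (if e = e' then 1 else 0)" if "e \<in> E" "e' \<in> E" for e e'
    using eigsys_ci[OF es that] .
  have orth: "pairwise orthogonal T"
    unfolding pairwise_def orthogonal_def T_def
    by (auto simp: Re_ci[symmetric] J_def ci_scale_left ci_scale_right c)
  have n1: "norm e = 1" if "e \<in> E" for e using es that unfolding eigsys_def by auto
  have z: "0 \<notin> T" unfolding T_def J_def using n1 by (force simp: norm_scale_s)
  have disj: "E \<inter> J ` E = {}"
  proof (rule ccontr)
    assume "E \<inter> J ` E \<noteq> {}"
    then obtain e e' where "e \<in> E" "e' \<in> E" "e = J e'" by auto
    hence "ci e' e = \<i> * ci e' e'" by (simp add: J_def ci_scale_right)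
    thus False using c[OF \<open>e' \<in> E\<close> \<open>e' \<in> E\<close>] c[OF \<open>e' \<in> E\<close> \<open>e \<in> E\<close>]
      by (auto split: if_splits)
  qed
  have injJ: "inj_on J E"
  proof
    fix a b assume "J a = J b"
    hence "(-\<i>) *s J a = (-\<i>) *s J b" by simp
    thus "a = b" by (simp add: J_def vec_eq_iff)
  qed
  have "card T = card E + card E"
    unfolding T_def using fin disj by (simp add: card_Un_disjoint card_image[OF injJ])
  moreover have "independent T" by (rule pairwise_orthogonal_independent[OF orth z])
  hence "card T \<le> DIM(complex^'n)" using independent_bound by blast
  ultimately show ?thesis by simp
qed

lemma onb_coeff:
  assumes es: "eigsys A E" and e'E: "e' \<in> E"
  shows "ci e' (\<Sum>e\<in>E. c e *s e) = c e'"
proof -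
  have "ci e' (\<Sum>e\<in>E. c e *s e) = (\<Sum>e\<in>E. c e * ci e' e)"
    by (simp add: ci_sum_right ci_scale_right)
  also have "\<dots> = (\<Sum>e\<in>E. if e = e' then c e else 0)"
    by (intro sum.cong refl) (simp add: eigsys_ci[OF es e'E])
  also have "\<dots> = c e'" using e'E es unfolding eigsys_def by simp
  finally show ?thesis .
qed

theorem eig_basis:
  fixes A :: "complex^'n^'n"
  assumes herm: "hermitian A"
  shows "\<exists>E. eigsys A E \<and> (\<forall>x. x = (\<Sum>e\<in>E. ci e x *s e))"
proof -
  define P where "P k \<longleftrightarrow> (\<exists>E. eigsys A E \<and> card E = k)" for k
  have "P 0" unfolding P_def by (rule exI[of _ "{}"]) (simp add: eigsys_def)
  moreover have "\<forall>k. P k \<longrightarrow> k \<le> CARD('n)" unfolding P_def using eig_card by blast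
  ultimately obtain k where Pk: "P k" and kmax: "\<forall>k'. P k' \<longrightarrow> k' \<le> k"
    using Nat.ex_has_greatest_nat[of P 0 "CARD('n)"] by blast
  then obtain E where es: "eigsys A E" and cE: "card E = k" unfolding P_def by blast
  have fin: "finite E" using es unfolding eigsys_def by auto
  have exq: "x = (\<Sum>e\<in>E. ci e x *s e)" for x
  proof (rule ccontr)
    assume ne: "x \<noteq> (\<Sum>e\<in>E. ci e x *s e)"
    define y where "y = x - (\<Sum>e\<in>E. ci e x *s e)"
    have y0: "y \<noteq> 0" using ne unfolding y_def by simp
    have yE: "\<forall>e\<in>E. ci e y = 0" unfolding y_def by (simp add: ci_diff_right onb_coeff[OF es])
    obtain z where nz: "norm z = 1" and ez: "\<exists>\<mu>::real. A *v z = of_real \<mu> *s z" and zE: "\<forall>e\<in>E. ci e z = 0"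
      using eig_step[OF herm es y0 yE] by blast
    have "z \<notin> E" using zE nz ci_unit[OF nz] by auto
    have "eigsys A (insert z E)"
    proof -
      have zE': "ci z e = 0" if "e \<in> E" for e
      proof -
        have "ci z e = cnj (ci e z)" by (rule ci_cnj)
        thus ?thesis using zE that by simp
      qed
      show ?thesis using es nz ez zE zE' unfolding eigsys_def by auto
    qed
    moreover have "card (insert z E) = Suc k" using fin \<open>z \<notin> E\<close> cE by simp
    ultimately have "P (Suc k)" unfolding P_def by blast
    thus False using kmax by auto
  qed
  show ?thesis by (rule exI[of _ E], rule conjI[OF es], rule allI, rule exq)
qed


lemma ci_sq: "ci e x * ci x e = (of_real (cmod (ci e x)))^2"
proof -
  have "ci x e = cnj (ci e x)" by (rule ci_cnj)
  thus ?thesis by (simp add: cc)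
qed

lemma psd_ci: "psd M \<longleftrightarrow> hermitian M \<and> (\<forall>x. 0 \<le> Re (ci x (M *v x)))"
  by (simp add: psd_def ci_def)

definition fm :: "(complex^'n) set \<Rightarrow> (complex^'n \<Rightarrow> real) \<Rightarrow> complex^'n^'n" where
  "fm E h = (\<chi> i j. \<Sum>e\<in>E. of_real (h e) * e $ i * cnj (e $ j))"

lemma fm_mv: "fm E h *v x = (\<Sum>e\<in>E. (of_real (h e) * ci e x) *s e)"
  by (simp add: vec_eq_iff fm_def matrix_vector_mult_def sum_component ci_def
      sum_distrib_left sum_distrib_right sum.swap[of _ E] algebra_simps)

lemma fm_herm: "hermitian (fm E h)"
  unfolding hermitian_def fm_def by (simp add: cnj_sum algebra_simps)

lemma mv_sum: "(A::complex^'n^'n) *v (\<Sum>e\<in>E. f e) = (\<Sum>e\<in>E. A *v f e)"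
  by (induct E rule: infinite_finite_induct) (simp_all add: matrix_vector_right_distrib)

lemma mv_diff_left: "((P::complex^'n^'n) - Q) *v x = P *v x - Q *v x"
  by (simp add: vec_eq_iff matrix_vector_mult_def left_diff_distrib sum_subtractf)

lemma mv_neg_left: "(- (P::complex^'n^'n)) *v x = - (P *v x)"
  by (simp add: vec_eq_iff matrix_vector_mult_def sum_negf)

lemma ci_onb_left:
  assumes es: "eigsys A E"
  shows "ci (\<Sum>e\<in>E. c e *s e) (\<Sum>e\<in>E. d e *s e) = (\<Sum>e\<in>E. cnj (c e) * d e)"
  by (simp add: ci_sum_left ci_scale_left onb_coeff[OF es])

lemma fm_diff: "fm E h - fm E k = fm E (\<lambda>e. h e - k e)"
  by (simp add: vec_eq_iff fm_def sum_subtractf[symmetric] algebra_simps)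

lemma fm_neg: "- fm E h = fm E (\<lambda>e. - h e)"
  by (simp add: vec_eq_iff fm_def sum_negf[symmetric])

lemma fm_zero: "(\<forall>e\<in>E. h e = 0) \<Longrightarrow> fm E h = 0"
  by (simp add: vec_eq_iff fm_def)

context
  fixes A :: "complex^'n^'n" and E and mu
  assumes es: "eigsys A E" and exp: "\<forall>x. x = (\<Sum>e\<in>E. ci e x *s e)"
    and mu: "\<forall>e\<in>E. A *v e = of_real (mu e) *s e"
begin

lemma fm_q: "ci x (fm E h *v x) = of_real (\<Sum>e\<in>E. h e * (cmod (ci e x))^2)"
proof -
  have "ci x (fm E h *v x) = (\<Sum>e\<in>E. of_real (h e) * ci e x * ci x e)"
    by (simp add: fm_mv ci_sum_right ci_scale_right)
  also have "\<dots> = (\<Sum>e\<in>E. of_real (h e * (cmod (ci e x))^2))"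
    by (intro sum.cong refl) (simp add: mult.assoc ci_sq)
  finally show ?thesis by simp
qed

lemma fm_psd: "\<forall>e\<in>E. h e \<ge> 0 \<Longrightarrow> psd (fm E h)"
  unfolding psd_ci fm_q Re_complex_of_real using fm_herm by (auto intro!: sum_nonneg)

lemma fm_eq_iff: "fm E h *v x = fm E k *v x" if "\<forall>e\<in>E. h e = k e"
  unfolding fm_mv using that by (intro sum.cong refl) simp

lemma A_fm: "A = fm E mu"
proof -
  have "A *v x = fm E mu *v x" for x
  proof -
    have "A *v x = A *v (\<Sum>e\<in>E. ci e x *s e)" by (rule arg_cong[OF exp[rule_format]])
    also have "\<dots> = (\<Sum>e\<in>E. ci e x *s (A *v e))" by (simp add: mv_sum mv_scale)
    also have "\<dots> = fm E mu *v x" unfolding fm_mv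
      by (intro sum.cong refl) (simp add: mu mult.commute)
    finally show ?thesis .
  qed
  thus ?thesis by (simp add: matrix_eq)
qed

lemma fm_mv_exp: "fm E h *v x = (\<Sum>e\<in>E. (of_real (h e) * ci e x) *s e)" by (rule fm_mv)

lemma fm_mult: "fm E h ** fm E k = fm E (\<lambda>e. h e * k e)"
proof -
  have "(fm E h ** fm E k) *v x = fm E (\<lambda>e. h e * k e) *v x" for x
  proof -
    have "(fm E h ** fm E k) *v x = fm E h *v (fm E k *v x)" by (simp add: matrix_vector_mul_assoc)
    also have "\<dots> = (\<Sum>e\<in>E. (of_real (h e) * (of_real (k e) * ci e x)) *s e)"
      unfolding fm_mv[of E h] unfolding fm_mv[of E k] by (simp add: onb_coeff[OF es])
    also have "\<dots> = fm E (\<lambda>e. h e * k e) *v x" unfolding fm_mv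
      by (intro sum.cong refl) (simp add: mult.assoc)
    finally show ?thesis .
  qed
  thus ?thesis by (simp add: matrix_eq)
qed

lemma norm_exp: "norm x ^ 2 = (\<Sum>e\<in>E. (cmod (ci e x))^2)"
proof -
  have "of_real (norm x ^ 2) = ci x x" by (simp add: ci_self)
  also have "\<dots> = ci (\<Sum>e\<in>E. ci e x *s e) (\<Sum>e\<in>E. ci e x *s e)"
    by (rule arg_cong[OF exp[rule_format], where f = "\<lambda>z. ci z z"])
  also have "\<dots> = (\<Sum>e\<in>E. cnj (ci e x) * ci e x)" by (rule ci_onb_left[OF es])
  also have "\<dots> = of_real (\<Sum>e\<in>E. (cmod (ci e x))^2)"
    by (simp add: mult.commute cc)
  finally show ?thesis using of_real_eq_iff by blast
qed

lemma fm_norm: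
  assumes "\<forall>e\<in>E. \<bar>h e\<bar> \<le> M" and "M \<ge> 0"
  shows "norm (fm E h *v x) \<le> M * norm x"
proof -
  have "norm (fm E h *v x) ^ 2 = (\<Sum>e\<in>E. (cmod (ci e (fm E h *v x)))^2)" by (rule norm_exp)
  also have "\<dots> = (\<Sum>e\<in>E. (h e)^2 * (cmod (ci e x))^2)"
    unfolding fm_mv by (intro sum.cong refl) (simp add: onb_coeff[OF es] norm_mult power_mult_distrib)
  also have "\<dots> \<le> (\<Sum>e\<in>E. M^2 * (cmod (ci e x))^2)"
  proof (intro sum_mono mult_right_mono)
    fix e assume "e \<in> E"
    hence "\<bar>h e\<bar> \<le> M" using assms(1) by blast
    hence "\<bar>h e\<bar>^2 \<le> M^2" by (rule power_mono) simp
    thus "(h e)^2 \<le> M^2" by simp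
  qed simp
  also have "\<dots> = (M * norm x)^2" by (simp add: norm_exp sum_distrib_left power_mult_distrib)
  finally have "norm (fm E h *v x) ^ 2 \<le> (M * norm x)^2" .
  thus ?thesis by (rule power2_le_imp_le) (use assms(2) in simp)
qed

end


lemma ci_zero_self: "ci v v = 0 \<Longrightarrow> v = 0"
  by (simp add: ci_self)

lemma herm_psd: "psd P \<Longrightarrow> hermitian P" by (simp add: psd_def)

lemma pe:
  fixes A P :: "complex^'n^'n"
  assumes pP: "psd P" and pN: "psd (P - A)" and PN: "P ** (P - A) = 0"
    and ev: "A *v e = of_real \<mu> *s e"
  shows "P *v e = of_real (max \<mu> 0) *s e"
proof -
  define N where "N = P - A"
  define v where "v = P *v e"
  define w where "w = N *v e"
  have vw: "v - w = of_real \<mu> *s e" unfolding v_def w_def N_def by (simp add: mv_diff_left ev)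
  have Pw: "P *v w = 0" unfolding w_def N_def by (simp add: matrix_vector_mul_assoc PN)
  have cvw: "ci v w = 0" unfolding v_def using ci_herm[OF herm_psd[OF pP], of e w] Pw
    by (simp add: w_def)
  have cwv: "ci w v = 0" using cvw by (simp add: ci_cnj[of w v])
  have ev0: "0 \<le> Re (ci e v)" using pP unfolding psd_ci v_def by simp
  have ew0: "0 \<le> Re (ci e w)" using pN unfolding psd_ci w_def N_def by simp
  show ?thesis
  proof (cases "\<mu> > 0")
    case True
    have eq1: "ci w (v - w) = - of_real (norm w ^ 2)" by (simp add: ci_diff_right cwv ci_self)
    have eq2: "ci w (v - w) = of_real \<mu> * cnj (ci e w)" by (simp add: vw ci_scale_right ci_cnj[of w e])
    have "Re (- of_real (norm w ^ 2)) = Re (of_real \<mu> * cnj (ci e w))" using eq1 eq2 by simp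
    hence "- (norm w ^ 2) = \<mu> * Re (ci e w)" by simp
    moreover have "\<mu> * Re (ci e w) \<ge> 0" using True ew0 by simp
    ultimately have "norm w ^ 2 \<le> 0" by linarith
    hence "w = 0" by simp
    thus ?thesis using vw True unfolding v_def by simp
  next
    case False
    show ?thesis
    proof (cases "\<mu> < 0")
      case True
      have eq1: "ci v (v - w) = of_real (norm v ^ 2)" by (simp add: ci_diff_right cvw ci_self)
      have eq2: "ci v (v - w) = of_real \<mu> * cnj (ci e v)" by (simp add: vw ci_scale_right ci_cnj[of v e])
      have "Re (of_real (norm v ^ 2)) = Re (of_real \<mu> * cnj (ci e v))" using eq1 eq2 by simp
      hence "norm v ^ 2 = \<mu> * Re (ci e v)" by simp
      moreover have "\<mu> * Re (ci e v) \<le> 0" using True ev0 by (simp add: mult_nonpos_nonneg)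
      ultimately have "norm v ^ 2 \<le> 0" by linarith
      hence "v = 0" by simp
      thus ?thesis using True unfolding v_def by simp
    next
      case False
      hence "\<mu> = 0" using \<open>\<not> \<mu> > 0\<close> by simp
      hence "v = w" using vw by simp
      hence "v = 0" using cvw ci_zero_self by simp
      thus ?thesis using \<open>\<mu> = 0\<close> unfolding v_def by simp
    qed
  qed
qed

lemma herm_comm0:
  fixes P N :: "complex^'n^'n"
  assumes "hermitian P" "hermitian N" "P ** N = 0"
  shows "N ** P = 0"
proof -
  have "N *v (P *v x) = 0" for x
  proof -
    define z where "z = N *v (P *v x)"
    have "ci z z = ci (P *v (N *v z)) x"
      unfolding z_def by (simp add: ci_herm[OF assms(2)] ci_herm[OF assms(1)])
    also have "P *v (N *v z) = 0" by (simp add: matrix_vector_mul_assoc assms(3))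
    finally show ?thesis using ci_zero_self z_def by simp
  qed
  thus ?thesis by (simp add: matrix_eq matrix_vector_mul_assoc[symmetric])
qed


lemma decomp_ex:
  fixes A :: "complex^'n^'n"
  assumes "hermitian A"
  obtains E mu where "eigsys A E" "\<forall>x. x = (\<Sum>e\<in>E. ci e x *s e)"
    "\<forall>e\<in>E. A *v e = of_real (mu e) *s e"
proof -
  obtain E where esex: "eigsys A E \<and> (\<forall>x. x = (\<Sum>e\<in>E. ci e x *s e))"
    using eig_basis[OF assms] by (rule exE)
  have es: "eigsys A E" and ex: "\<forall>x. x = (\<Sum>e\<in>E. ci e x *s e)" using esex by (rule conjunct1, rule conjunct2)
  define mu where "mu e = (SOME m::real. A *v e = of_real m *s e)" for e
  have mu0: "\<forall>e\<in>E. A *v e = of_real (mu e) *s e"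
    using es unfolding eigsys_def mu_def by (metis (mono_tags, lifting) someI_ex)
  show ?thesis by (rule that[OF es ex mu0])
qed

lemma pos_ex1:
  fixes A :: "complex^'n^'n"
  assumes herm: "hermitian A"
  shows "\<exists>!P. psd P \<and> psd (P - A) \<and> P ** (P - A) = 0"
proof -
  obtain E mu where es: "eigsys A E" and ex: "\<forall>x. x = (\<Sum>e\<in>E. ci e x *s e)"
    and mu: "\<forall>e\<in>E. A *v e = of_real (mu e) *s e"
    by (rule decomp_ex[OF herm])
  define P0 where "P0 = fm E (\<lambda>e. max (mu e) 0)"
  have AE: "A = fm E mu" by (rule A_fm[OF es ex mu])
  have d: "P0 - A = fm E (\<lambda>e. max (mu e) 0 - mu e)" unfolding P0_def AE by (rule fm_diff)
  have h1: "psd P0" unfolding P0_def by (rule fm_psd[OF es ex mu]) simp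
  have h2: "psd (P0 - A)"
  proof -
    have "psd (fm E (\<lambda>e. max (mu e) 0 - mu e))" by (rule fm_psd[OF es ex mu]) simp
    thus ?thesis using d by simp
  qed
  have h3: "P0 ** (P0 - A) = 0" unfolding d unfolding P0_def fm_mult[OF es ex mu]
    by (rule fm_zero) (auto simp: max_def)
  have u: "P = P0" if "psd P" "psd (P - A)" "P ** (P - A) = 0" for P
  proof -
    have "P *v x = P0 *v x" for x
    proof -
      have "P *v x = P *v (\<Sum>e\<in>E. ci e x *s e)" by (rule arg_cong[OF ex[rule_format]])
      also have "\<dots> = (\<Sum>e\<in>E. ci e x *s (P *v e))" by (simp add: mv_sum mv_scale)
      also have "\<dots> = P0 *v x" unfolding P0_def fm_mv
        by (intro sum.cong refl) (simp add: pe[OF that mu[rule_format]] mult.commute)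
      finally show ?thesis .
    qed
    thus ?thesis by (simp add: matrix_eq)
  qed
  show ?thesis
  proof (rule ex1I[of _ P0])
    show "psd P0 \<and> psd (P0 - A) \<and> P0 ** (P0 - A) = 0" using h1 h2 h3 by (intro conjI)
  next
    fix P assume a: "psd P \<and> psd (P - A) \<and> P ** (P - A) = 0"
    show "P = P0" by (rule u) (use a in auto)
  qed
qed

lemma pos_spec:
  fixes A :: "complex^'n^'n"
  assumes "hermitian A"
  shows "psd (pos_part A) \<and> psd (pos_part A - A) \<and> pos_part A ** (pos_part A - A) = 0"
  unfolding pos_part_def by (rule theI'[OF pos_ex1[OF assms]])

lemma pos_unique:
  fixes A :: "complex^'n^'n"
  assumes "hermitian A" "psd P" "psd (P - A)" "P ** (P - A) = 0"
  shows "pos_part A = P"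
  unfolding pos_part_def by (rule the1_equality[OF pos_ex1[OF assms(1)]]) (use assms(2-4) in blast)

lemma herm_entry: "hermitian A \<Longrightarrow> A $ i $ j = cnj (A $ j $ i)"
  unfolding hermitian_def by blast

lemma herm_neg: assumes h: "hermitian A" shows "hermitian (- A)"
  unfolding hermitian_def
proof (intro allI)
  fix i j
  have "A $ i $ j = cnj (A $ j $ i)" by (rule herm_entry[OF h])
  thus "(- A) $ i $ j = cnj ((- A) $ j $ i)" by simp
qed

lemma neg_pos:
  fixes A :: "complex^'n^'n"
  assumes h: "hermitian A"
  shows "neg_part A = pos_part (- A)"
proof -
  have s: "psd (pos_part A)" "psd (pos_part A - A)" "pos_part A ** (pos_part A - A) = 0"
    using pos_spec[OF h] by auto
  have "(pos_part A - A) ** pos_part A = 0"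
    by (rule herm_comm0[OF herm_psd[OF s(1)] herm_psd[OF s(2)] s(3)])
  hence "pos_part (- A) = pos_part A - A"
    using s by (intro pos_unique herm_neg h) simp_all
  thus ?thesis by (simp add: neg_part_def)
qed


lemma mv_bl: "bounded_linear (\<lambda>x::complex^'n. (P::complex^'n^'n) *v x)"
  unfolding linear_conv_bounded_linear[symmetric]
  by (rule linearI) (simp_all add: matrix_vector_right_distrib mv_scaleR)

lemma L2:
  fixes B :: "complex^'n^'n"
  assumes h: "hermitian B"
  shows "Re (ci x (B *v x)) \<le> opnorm (pos_part B) * norm x ^ 2"
proof -
  define P where "P = pos_part B"
  have s: "psd P" "psd (P - B)" using pos_spec[OF h] unfolding P_def by auto
  have "Re (ci x ((P - B) *v x)) \<ge> 0" using s(2) unfolding psd_ci by blast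
  hence "Re (ci x (B *v x)) \<le> Re (ci x (P *v x))" by (simp add: mv_diff_left ci_diff_right)
  also have "\<dots> = inner x (P *v x)" by (simp add: Re_ci)
  also have "\<dots> \<le> norm x * norm (P *v x)" by (rule norm_cauchy_schwarz)
  also have "\<dots> \<le> norm x * (opnorm P * norm x)"
    unfolding opnorm_def by (intro mult_left_mono onorm[OF mv_bl]) simp
  finally show ?thesis unfolding P_def by (simp add: power2_eq_square mult_ac)
qed

lemma L3:
  fixes A :: "complex^'n^'n"
  assumes herm: "hermitian A" and np: "\<not> psd (- A)"
  shows "\<exists>u. norm u = 1 \<and> opnorm (pos_part A) \<le> Re (ci u (A *v u)) \<and> 0 < Re (ci u (A *v u))"
proof -
  obtain E mu where es: "eigsys A E" and ex: "\<forall>x. x = (\<Sum>e\<in>E. ci e x *s e)"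
    and mu: "\<forall>e\<in>E. A *v e = of_real (mu e) *s e"
    by (rule decomp_ex[OF herm])
  have fin: "finite E" using es unfolding eigsys_def by auto
  define P0 where "P0 = fm E (\<lambda>e. max (mu e) 0)"
  have AE: "A = fm E mu" by (rule A_fm[OF es ex mu])
  have d: "P0 - A = fm E (\<lambda>e. max (mu e) 0 - mu e)" unfolding P0_def AE by (rule fm_diff)
  have "psd P0" unfolding P0_def by (rule fm_psd[OF es ex mu]) simp
  moreover have "psd (P0 - A)"
  proof -
    have "psd (fm E (\<lambda>e. max (mu e) 0 - mu e))" by (rule fm_psd[OF es ex mu]) simp
    thus ?thesis using d by simp
  qed
  moreover have "P0 ** (P0 - A) = 0" unfolding d unfolding P0_def fm_mult[OF es ex mu]
    by (rule fm_zero) (auto simp: max_def)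
  ultimately have pp: "pos_part A = P0" by (rule pos_unique[OF herm])
  have "\<exists>e\<in>E. mu e > 0"
  proof (rule ccontr)
    assume "\<not> (\<exists>e\<in>E. mu e > 0)"
    hence "psd (fm E (\<lambda>e. - mu e))" by (intro fm_psd[OF es ex mu]) auto
    thus False using np unfolding AE fm_neg by simp
  qed
  then obtain e0 where e0: "e0 \<in> E" "mu e0 > 0" by blast
  define m where "m = Max (mu ` E)"
  have mge: "mu e \<le> m" if "e \<in> E" for e unfolding m_def using fin that by simp
  have "m \<in> mu ` E" unfolding m_def using fin e0 by (intro Max_in) auto
  then obtain u where uE: "u \<in> E" and mu_u: "mu u = m" by blast
  have mpos: "m > 0" using mge[OF e0(1)] e0(2) by simp
  have nu: "norm u = 1" using es uE unfolding eigsys_def by auto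
  have q: "Re (ci u (A *v u)) = m" using mu uE mu_u by (simp add: ci_scale_right ci_unit[OF nu])
  have "opnorm P0 \<le> m" unfolding opnorm_def P0_def
    by (rule onorm_le, rule fm_norm[OF es ex mu]) (use mge mpos in auto)
  hence "opnorm (pos_part A) \<le> Re (ci u (A *v u))" unfolding pp q .
  moreover have "0 < Re (ci u (A *v u))" unfolding q by (rule mpos)
  ultimately show ?thesis using nu by blast
qed


lemma herm_add: assumes h: "hermitian X" "hermitian Y" shows "hermitian (X + Y)"
  unfolding hermitian_def
proof (intro allI)
  fix i j
  have "X $ i $ j = cnj (X $ j $ i)" "Y $ i $ j = cnj (Y $ j $ i)" by (rule herm_entry[OF h(1)], rule herm_entry[OF h(2)])
  thus "(X + Y) $ i $ j = cnj ((X + Y) $ j $ i)" by simp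
qed
lemma herm_diff: assumes h: "hermitian X" "hermitian Y" shows "hermitian (X - Y)"
  unfolding hermitian_def
proof (intro allI)
  fix i j
  have "X $ i $ j = cnj (X $ j $ i)" "Y $ i $ j = cnj (Y $ j $ i)" by (rule herm_entry[OF h(1)], rule herm_entry[OF h(2)])
  thus "(X - Y) $ i $ j = cnj ((X - Y) $ j $ i)" by simp
qed
lemma herm_scaleR: assumes h: "hermitian X" shows "hermitian (c *\<^sub>R X)"
  unfolding hermitian_def
proof (intro allI)
  fix i j
  have "X $ i $ j = cnj (X $ j $ i)" by (rule herm_entry[OF h])
  thus "(c *\<^sub>R X) $ i $ j = cnj ((c *\<^sub>R X) $ j $ i)" by simp
qed
lemma herm_one: "hermitian (mat 1 :: complex^'n^'n)"
  by (simp add: hermitian_def mat_def)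
lemma mv_add_left: "((P::complex^'n^'n) + Q) *v x = P *v x + Q *v x"
  by (simp add: vec_eq_iff matrix_vector_mult_def distrib_right sum.distrib)
lemma mv_scaleR_left: "(c *\<^sub>R (P::complex^'n^'n)) *v x = c *\<^sub>R (P *v x)"
  by (simp add: vec_eq_iff matrix_vector_mult_def scaleR_sum_right)
lemma q_add: "Re (ci x ((P + Q) *v x)) = Re (ci x (P *v x)) + Re (ci x (Q *v x))"
  by (simp add: mv_add_left ci_add_right)
lemma q_scaleR: "Re (ci x ((c *\<^sub>R P) *v x)) = c * Re (ci x (P *v x))"
  by (simp add: mv_scaleR_left ci_scaleR_right)
lemma q_one: "Re (ci x ((mat 1 :: complex^'n^'n) *v x)) = norm x ^ 2"
  by (simp add: ci_self)
lemma q_diff: "Re (ci x ((P - Q) *v x)) = Re (ci x (P *v x)) - Re (ci x (Q *v x))"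
  by (simp add: mv_diff_left ci_diff_right)
lemma psd_add: "psd X \<Longrightarrow> psd Y \<Longrightarrow> psd (X + Y)"
  unfolding psd_ci by (simp add: herm_add q_add)
lemma psd_scaleR: "psd X \<Longrightarrow> c \<ge> 0 \<Longrightarrow> psd (c *\<^sub>R X)"
  unfolding psd_ci by (simp add: herm_scaleR q_scaleR)

theorem mainTheorem11:
  fixes A :: "complex^'n^'n" and B :: "complex^'k^'k"
  assumes "hermitian A" and "hermitian B"
    and "\<not> psd A" and "\<not> psd (- A)"
    and "\<not> psd B" and "\<not> psd (- B)"
    and "opnorm (pos_part A) \<ge> opnorm (pos_part B)"
    and "opnorm (neg_part A) \<ge> opnorm (neg_part B)"
  shows "\<exists>\<Phi> :: complex^'n^'n \<Rightarrow> complex^'k^'k.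
           herm_linear \<Phi> \<and> positive_map \<Phi> \<and> unital_map \<Phi> \<and> \<Phi> A = B"
proof -
  note hA = assms(1) and hB = assms(2)
  obtain u where uu: "norm u = 1 \<and> opnorm (pos_part A) \<le> Re (ci u (A *v u)) \<and> 0 < Re (ci u (A *v u))"
    using L3[OF hA assms(4)] by (rule exE)
  have nu: "norm u = 1" and ua: "opnorm (pos_part A) \<le> Re (ci u (A *v u))"
    and upos: "0 < Re (ci u (A *v u))" using uu by simp_all
  have nn: "\<not> psd (- (- A))" using assms(3) by simp
  obtain v where vv: "norm v = 1 \<and> opnorm (pos_part (- A)) \<le> Re (ci v ((- A) *v v)) \<and> 0 < Re (ci v ((- A) *v v))"
    using L3[OF herm_neg[OF hA] nn] by (rule exE)
  have nv: "norm v = 1" and vb: "opnorm (pos_part (- A)) \<le> Re (ci v ((- A) *v v))"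
    and vpos: "0 < Re (ci v ((- A) *v v))" using vv by simp_all
  define a where "a = Re (ci u (A *v u))"
  define b where "b = - Re (ci v (A *v v))"
  have bdef: "Re (ci v ((- A) *v v)) = b" unfolding b_def by (simp add: mv_neg_left ci_def sum_negf)
  have ap: "a > 0" using upos a_def by simp
  have bp: "b > 0" using vpos bdef by simp
  have Bup: "Re (ci x (B *v x)) \<le> a * norm x ^ 2" for x
  proof -
    have "Re (ci x (B *v x)) \<le> opnorm (pos_part B) * norm x ^ 2" by (rule L2[OF hB])
    also have "\<dots> \<le> a * norm x ^ 2" using assms(7) ua a_def by (intro mult_right_mono) auto
    finally show ?thesis .
  qed
  have Blo: "- Re (ci x (B *v x)) \<le> b * norm x ^ 2" for x
  proof -
    have "Re (ci x ((- B) *v x)) \<le> opnorm (pos_part (- B)) * norm x ^ 2" by (rule L2[OF herm_neg[OF hB]])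
    moreover have "opnorm (pos_part (- B)) \<le> b"
      using assms(8) vb bdef by (simp add: neg_pos[OF hA] neg_pos[OF hB])
    hence "opnorm (pos_part (- B)) * norm x ^ 2 \<le> b * norm x ^ 2" by (rule mult_right_mono) simp
    ultimately have "Re (ci x ((- B) *v x)) \<le> b * norm x ^ 2" by linarith
    thus ?thesis by (simp add: mv_neg_left ci_def sum_negf)
  qed
  define P' where "P' = (1 / (a + b)) *\<^sub>R (B + b *\<^sub>R mat 1)"
  define Q' where "Q' = (1 / (a + b)) *\<^sub>R (a *\<^sub>R mat 1 - B)"
  have hP': "hermitian P'" unfolding P'_def by (intro herm_scaleR herm_add hB herm_one)
  have hQ': "hermitian Q'" unfolding Q'_def by (intro herm_scaleR herm_diff hB herm_one)
  have qP': "Re (ci x (P' *v x)) = (1 / (a + b)) * (Re (ci x (B *v x)) + b * norm x ^ 2)" for x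
    unfolding P'_def by (simp only: q_scaleR q_add q_one)
  have qQ': "Re (ci x (Q' *v x)) = (1 / (a + b)) * (a * norm x ^ 2 - Re (ci x (B *v x)))" for x
    unfolding Q'_def by (simp only: q_scaleR q_diff q_one)
  have pP': "psd P'" unfolding psd_ci
  proof (intro conjI allI hP')
    fix x
    have "0 \<le> Re (ci x (B *v x)) + b * norm x ^ 2" using Blo[of x] by linarith
    thus "0 \<le> Re (ci x (P' *v x))" unfolding qP' using ap bp by simp
  qed
  have pQ': "psd Q'" unfolding psd_ci
  proof (intro conjI allI hQ')
    fix x
    have "0 \<le> a * norm x ^ 2 - Re (ci x (B *v x))" using Bup[of x] by linarith
    thus "0 \<le> Re (ci x (Q' *v x))" unfolding qQ' using ap bp by simp
  qed
  have ab: "a / (a + b) + b / (a + b) = 1" using ap bp by (simp add: add_divide_distrib[symmetric])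
  define \<Phi> where "\<Phi> X = Re (ci u (X *v u)) *\<^sub>R P' + Re (ci v (X *v v)) *\<^sub>R Q'" for X :: "complex^'n^'n"
  have "herm_linear \<Phi>"
    unfolding herm_linear_def
  proof (intro conjI allI impI)
    fix X :: "complex^'n^'n"
    show "hermitian (\<Phi> X)" unfolding \<Phi>_def
      using hP' hQ' by (intro herm_add herm_scaleR)
  next
    fix X Y :: "complex^'n^'n" and c d :: real
    show "\<Phi> (c *\<^sub>R X + d *\<^sub>R Y) = c *\<^sub>R \<Phi> X + d *\<^sub>R \<Phi> Y"
      unfolding \<Phi>_def q_add q_scaleR by (simp add: scaleR_add_left scaleR_add_right scaleR_scaleR)
  qed
  moreover have "positive_map \<Phi>"
    unfolding positive_map_def
  proof (intro allI impI)
    fix X :: "complex^'n^'n" assume "psd X"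
    hence "0 \<le> Re (ci u (X *v u))" "0 \<le> Re (ci v (X *v v))" unfolding psd_ci by auto
    thus "psd (\<Phi> X)" unfolding \<Phi>_def using pP' pQ' by (intro psd_add psd_scaleR)
  qed
  moreover have "unital_map \<Phi>"
  proof -
    have "\<Phi> (mat 1) = P' + Q'" unfolding \<Phi>_def q_one nu nv by simp
    also have "\<dots> = (1 / (a + b)) *\<^sub>R ((a + b) *\<^sub>R mat 1)"
      unfolding P'_def Q'_def scaleR_add_right[symmetric] by (simp add: scaleR_add_left)
    also have "\<dots> = mat 1" using ap bp by simp
    finally show ?thesis unfolding unital_map_def .
  qed
  moreover have "\<Phi> A = B"
  proof -
    have "\<Phi> A = a *\<^sub>R P' + (- b) *\<^sub>R Q'" unfolding \<Phi>_def a_def b_def by simp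
    also have "\<dots> = (a / (a + b) + b / (a + b)) *\<^sub>R B"
      unfolding P'_def Q'_def by (simp add: scaleR_add_right scaleR_diff_right scaleR_add_left scaleR_scaleR)
    also have "\<dots> = B" unfolding ab by simp
    finally show ?thesis .
  qed
  ultimately show ?thesis by blast
qed

end
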